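(* Let $(M,\circ,\mathrm{OR})$ be a free $\mathbb{D}$-module of rank 3 with scalar product and orientation. Every real subspace $S\subset M$ all of whose nonzero elements are sliding vectors has real dimension at most 3, and the elements of $E$ are precisely the real subspaces of $M$ of real dimension 3 all of whose nonzero elements are sliding vectors.
   Context: $\mathbb{D}=\{a+\epsilon b: a,b\in\mathbb{R}\}$, $\epsilon^2=0$, $\mathfrak{Re}(a+\epsilon b)=a$, $\mathfrak{Du}(a+\epsilon b)=b$. A scalar product is a symmetric $\mathbb{D}$-bilinear $\circ:M\times M\to\mathbb{D}$ with $\mathfrak{Re}(x\circ x)\ge0$, equality iff $x\in\epsilon M$. $E$ is the set of real 3-dimensional subspaces $P\subset M$ with $\mathfrak{Du}(x\circ y)=0$ for all $x,y\in P$ and $P\cap\epsilon M=\{0\}$. A sliding vector is an element $z\in M\setminus\epsilon M$ with zero pitch, i.e. with $\mathfrak{Du}(z\circ z)=0$ (equivalently, writing $z=(a+\epsilon b)u$ with $a>0$, $b\in\mathbb{R}$, $u\circ u=1$, one has $b=0$). *)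

theory Defs
  imports Complex_Main
begin

text \<open>The ring D of dual numbers a + eps b with eps^2 = 0.\<close>

datatype dual = Dual (Re: real) (Du: real)

instantiation dual :: comm_ring_1
begin
definition "zero_dual = Dual 0 0"
definition "one_dual = Dual 1 0"
definition "plus_dual x y = Dual (Re x + Re y) (Du x + Du y)"
definition "minus_dual x y = Dual (Re x - Re y) (Du x - Du y)"
definition "uminus_dual x = Dual (- Re x) (- Du x)"
definition "times_dual x y = Dual (Re x * Re y) (Re x * Du y + Du x * Re y)"
instance
  by standard (auto simp: zero_dual_def one_dual_def plus_dual_def minus_dual_def
      uminus_dual_def times_dual_def algebra_simps intro: dual.expand)
end

definition dual_eps :: dual where "dual_eps = Dual 0 1"

definition rscale :: "(dual \<Rightarrow> 'm \<Rightarrow> 'm) \<Rightarrow> real \<Rightarrow> 'm \<Rightarrow> 'm" where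
  "rscale sc r x = sc (Dual r 0) x"

definition free_rank3_dmodule :: "(dual \<Rightarrow> 'm::ab_group_add \<Rightarrow> 'm) \<Rightarrow> bool" where
  "free_rank3_dmodule sc \<longleftrightarrow> module sc \<and>
     (\<exists>B. card B = 3 \<and> \<not> module.dependent sc B \<and> module.span sc B = UNIV)"

definition eps_part :: "(dual \<Rightarrow> 'm \<Rightarrow> 'm) \<Rightarrow> 'm set" where
  "eps_part sc = range (sc dual_eps)"

definition scalar_product :: "(dual \<Rightarrow> 'm::ab_group_add \<Rightarrow> 'm) \<Rightarrow> ('m \<Rightarrow> 'm \<Rightarrow> dual) \<Rightarrow> bool" where
  "scalar_product sc sp \<longleftrightarrow>
     (\<forall>x y. sp x y = sp y x) \<and>
     (\<forall>a b x y z. sp (sc a x + sc b y) z = a * sp x z + b * sp y z) \<and>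
     (\<forall>x. Re (sp x x) \<ge> 0) \<and>
     (\<forall>x. Re (sp x x) = 0 \<longleftrightarrow> x \<in> eps_part sc)"

definition real_subspace :: "(dual \<Rightarrow> 'm::ab_group_add \<Rightarrow> 'm) \<Rightarrow> 'm set \<Rightarrow> bool" where
  "real_subspace sc S \<longleftrightarrow> module.subspace (rscale sc) S"

definition real_dim :: "(dual \<Rightarrow> 'm::ab_group_add \<Rightarrow> 'm) \<Rightarrow> 'm set \<Rightarrow> nat" where
  "real_dim sc S = vector_space.dim (rscale sc) S"

definition sliding_vector :: "(dual \<Rightarrow> 'm \<Rightarrow> 'm) \<Rightarrow> ('m \<Rightarrow> 'm \<Rightarrow> dual) \<Rightarrow> 'm \<Rightarrow> bool" where
  "sliding_vector sc sp z \<longleftrightarrow> z \<notin> eps_part sc \<and> Du (sp z z) = 0"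

definition E_set :: "(dual \<Rightarrow> 'm::ab_group_add \<Rightarrow> 'm) \<Rightarrow> ('m \<Rightarrow> 'm \<Rightarrow> dual) \<Rightarrow> 'm set set" where
  "E_set sc sp = {P. real_subspace sc P \<and> real_dim sc P = 3 \<and>
      (\<forall>x\<in>P. \<forall>y\<in>P. Du (sp x y) = 0) \<and> P \<inter> eps_part sc = {0}}"

end

theory Submission
  imports Defs
begin

lemma Dual_add[simp]: "Dual a b + Dual c d = Dual (a+c) (b+d)" by (simp add: plus_dual_def)
lemma Dual_mult[simp]: "Dual a b * Dual c d = Dual (a*c) (a*d+b*c)" by (simp add: times_dual_def)
lemma Re_add[simp]: "Re (x + y) = Re x + Re y" and Du_add[simp]: "Du (x + y) = Du x + Du y"
  by (simp_all add: plus_dual_def)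
lemma Du_mult[simp]: "Du (x * y) = Re x * Du y + Du x * Re y" by (simp add: times_dual_def)
lemma Re_mult[simp]: "Re (x * y) = Re x * Re y" by (simp add: times_dual_def)
lemma Re_zero[simp]: "Re 0 = 0" and Du_zero[simp]: "Du 0 = 0" by (simp_all add: zero_dual_def)
lemma Re_one[simp]: "Re 1 = 1" and Du_one[simp]: "Du 1 = 0" by (simp_all add: one_dual_def)
lemma dual_zero_iff: "(x::dual) = 0 \<longleftrightarrow> Re x = 0 \<and> Du x = 0"
  by (cases x) (simp add: zero_dual_def)

lemma vs_rscale: assumes "module sc" shows "vector_space (rscale sc)"
proof -
  interpret module sc by fact
  show ?thesis
    by unfold_locales (auto simp: rscale_def scale_right_distrib scale_left_distrib[symmetric],
        metis one_dual_def scale_one)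
qed

lemma sc_decomp: assumes "module sc"
  shows "sc d b = rscale sc (Re d) b + rscale sc (Du d) (sc dual_eps b)"
proof -
  interpret module sc by fact
  have "d = Dual (Re d) 0 + Dual (Du d) 0 * dual_eps" by (cases d) (simp add: dual_eps_def)
  then have "sc d b = sc (Dual (Re d) 0 + Dual (Du d) 0 * dual_eps) b" by simp
  also have "\<dots> = rscale sc (Re d) b + rscale sc (Du d) (sc dual_eps b)"
    by (simp add: rscale_def scale_left_distrib)
  finally show ?thesis .
qed

locale setup3 = module sc for sc :: "dual \<Rightarrow> 'm::ab_group_add \<Rightarrow> 'm" +
  fixes b1 b2 b3 :: 'm
  assumes uniq: "\<And>d1 d2 d3. sc d1 b1 + sc d2 b2 + sc d3 b3 = 0 \<Longrightarrow> d1 = 0 \<and> d2 = 0 \<and> d3 = 0"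
  and spanning: "\<And>x. \<exists>d1 d2 d3. x = sc d1 b1 + sc d2 b2 + sc d3 b3"
begin

definition rep where "rep d1 d2 d3 = sc d1 b1 + sc d2 b2 + sc d3 b3"

lemma rep_inj: "rep d1 d2 d3 = rep e1 e2 e3 \<longleftrightarrow> d1 = e1 \<and> d2 = e2 \<and> d3 = e3"
proof
  assume "rep d1 d2 d3 = rep e1 e2 e3"
  moreover have "sc (d1 - e1) b1 + sc (d2 - e2) b2 + sc (d3 - e3) b3 = rep d1 d2 d3 - rep e1 e2 e3"
    unfolding rep_def scale_left_diff_distrib by (simp add: diff_add_eq add_diff_eq diff_diff_eq2 add.assoc add.left_commute)
  ultimately have "sc (d1 - e1) b1 + sc (d2 - e2) b2 + sc (d3 - e3) b3 = 0" by simp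
  from uniq[OF this] show "d1 = e1 \<and> d2 = e2 \<and> d3 = e3" by simp
qed auto

sublocale R: vector_space "rscale sc" by (rule vs_rscale) (rule module_axioms)

definition Bas where "Bas = {b1, b2, b3, sc dual_eps b1, sc dual_eps b2, sc dual_eps b3}"

lemma reps: "b1 = rep 1 0 0" "b2 = rep 0 1 0" "b3 = rep 0 0 1"
  "sc dual_eps b1 = rep dual_eps 0 0" "sc dual_eps b2 = rep 0 dual_eps 0" "sc dual_eps b3 = rep 0 0 dual_eps"
  by (simp_all add: rep_def)

lemma eps_ne: "dual_eps \<noteq> 0" "dual_eps \<noteq> 1" "(1::dual) \<noteq> 0"
  by (simp_all add: dual_eps_def zero_dual_def one_dual_def)

lemma distinct6: "distinct [b1, b2, b3, sc dual_eps b1, sc dual_eps b2, sc dual_eps b3]"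
proof -
  have "distinct [rep 1 0 0, rep 0 1 0, rep 0 0 1, rep dual_eps 0 0, rep 0 dual_eps 0, rep 0 0 dual_eps]"
    by (simp add: rep_inj eps_ne eps_ne[symmetric])
  then show ?thesis by (simp only: reps[symmetric])
qed

lemma rsc: "rscale sc r (sc d b) = sc (Dual r 0 * d) b" by (simp add: rscale_def)

lemma indep: "\<not> R.dependent Bas"
proof
  assume "R.dependent Bas"
  then obtain u where u: "\<exists>v\<in>Bas. u v \<noteq> 0" "(\<Sum>v\<in>Bas. rscale sc (u v) v) = 0"
    using R.dependent_finite[of Bas] by (auto simp: Bas_def)
  let ?e1 = "sc dual_eps b1" and ?e2 = "sc dual_eps b2" and ?e3 = "sc dual_eps b3"
  have "(\<Sum>v\<in>Bas. rscale sc (u v) v) = rscale sc (u b1) b1 + rscale sc (u b2) b2 + rscale sc (u b3) b3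
     + rscale sc (u ?e1) ?e1 + rscale sc (u ?e2) ?e2 + rscale sc (u ?e3) ?e3"
    using distinct6 unfolding Bas_def by (simp add: algebra_simps)
  also have "\<dots> = rep (Dual (u b1) (u ?e1)) (Dual (u b2) (u ?e2)) (Dual (u b3) (u ?e3))"
    unfolding rep_def sc_decomp[OF module_axioms, of "Dual _ _"] by (simp add: algebra_simps)
  finally have "rep (Dual (u b1) (u ?e1)) (Dual (u b2) (u ?e2)) (Dual (u b3) (u ?e3)) = rep 0 0 0"
    using u(2) by (simp add: rep_def)
  then show False using u(1) unfolding rep_inj Bas_def by (auto simp: zero_dual_def)
qed

lemma span_Bas: "R.span Bas = UNIV"
proof -
  have "x \<in> R.span Bas" for x
  proof -
    obtain d1 d2 d3 where x: "x = sc d1 b1 + sc d2 b2 + sc d3 b3" using spanning by blast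
    have "sc d b \<in> R.span Bas" if "b \<in> Bas" "sc dual_eps b \<in> Bas" for d b
      unfolding sc_decomp[OF module_axioms, of d b]
      by (intro R.span_add R.span_scale R.span_base that)
    then show ?thesis unfolding x Bas_def by (intro R.span_add) auto
  qed
  then show ?thesis by auto
qed

sublocale F: finite_dimensional_vector_space "rscale sc" Bas
  by unfold_locales (simp add: Bas_def, rule indep, rule span_Bas)

lemma card_Bas: "card Bas = 6"
  using distinct6 unfolding Bas_def by simp

lemma eps_subspace: "R.subspace (eps_part sc)"
  unfolding R.subspace_def eps_part_def
proof (intro conjI ballI allI)
  show "0 \<in> range (sc dual_eps)" by (metis rangeI scale_zero_right)
  show "x + y \<in> range (sc dual_eps)" if "x \<in> range (sc dual_eps)" "y \<in> range (sc dual_eps)" for x y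
    using that by (auto simp: scale_right_distrib[symmetric])
  show "rscale sc c x \<in> range (sc dual_eps)" if x: "x \<in> range (sc dual_eps)" for c x
  proof -
    obtain y where "x = sc dual_eps y" using x by (rule rangeE)
    then have "rscale sc c x = sc dual_eps (rscale sc c y)"
      by (simp add: rscale_def mult.commute)
    then show ?thesis by auto
  qed
qed

lemma dim_eps: "R.dim (eps_part sc) \<ge> 3"
proof -
  have "card {sc dual_eps b1, sc dual_eps b2, sc dual_eps b3} = 3" using distinct6 by simp
  moreover have "R.independent {sc dual_eps b1, sc dual_eps b2, sc dual_eps b3}"
    using indep R.independent_mono[of Bas] by (auto simp: Bas_def)
  ultimately show ?thesis
    using F.independent_card_le_dim[of "{sc dual_eps b1, sc dual_eps b2, sc dual_eps b3}" "eps_part sc"]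
    by (auto simp: eps_part_def)
qed

lemma dim_bound:
  assumes "R.subspace S" "S \<inter> eps_part sc = {0}"
  shows "R.dim S \<le> 3"
proof -
  have "R.dim {x + y |x y. x \<in> S \<and> y \<in> eps_part sc} + R.dim (S \<inter> eps_part sc) = R.dim S + R.dim (eps_part sc)"
    by (rule F.dim_sums_Int[OF assms(1) eps_subspace])
  moreover have "R.dim (S \<inter> eps_part sc) = 0" using assms(2) by simp
  moreover have "R.dim {x + y |x y. x \<in> S \<and> y \<in> eps_part sc} \<le> 6"
    using F.dim_subset_UNIV card_Bas by (simp add: F.dimension_def)
  ultimately show ?thesis using dim_eps by linarith
qed

end

lemma setup3_from_free:
  assumes "free_rank3_dmodule sc"
  shows "\<exists>b1 b2 b3. setup3 sc b1 b2 b3"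
proof -
  have m: "module sc" using assms by (simp add: free_rank3_dmodule_def)
  interpret module sc by fact
  obtain B where B: "card B = 3" "\<not> dependent B" "span B = UNIV"
    using assms by (auto simp: free_rank3_dmodule_def)
  then obtain b1 b2 b3 where b: "B = {b1,b2,b3}" "b1 \<noteq> b2" "b2 \<noteq> b3" "b1 \<noteq> b3"
    by (auto simp: card_3_iff)
  have "setup3 sc b1 b2 b3"
  proof (unfold_locales)
    fix d1 d2 d3 assume h: "sc d1 b1 + sc d2 b2 + sc d3 b3 = 0"
    define u where "u v = (if v = b1 then d1 else if v = b2 then d2 else d3)" for v
    have "(\<Sum>v\<in>B. sc (u v) v) = sc d1 b1 + sc d2 b2 + sc d3 b3"
      using b by (simp add: u_def add.assoc)
    with h have "(\<Sum>v\<in>B. sc (u v) v) = 0" by simp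
    with B(2) dependent_finite[of B] b have "\<forall>v\<in>B. u v = 0" by auto
    then show "d1 = 0 \<and> d2 = 0 \<and> d3 = 0" using b by (auto simp: u_def split: if_splits)
  next
    fix x
    have "x \<in> span B" using B by simp
    then obtain u where "x = (\<Sum>v\<in>B. sc (u v) v)" using span_finite[of B] b by auto
    then have "x = sc (u b1) b1 + sc (u b2) b2 + sc (u b3) b3"
      using b by (simp add: add.assoc)
    then show "\<exists>d1 d2 d3. x = sc d1 b1 + sc d2 b2 + sc d3 b3" by blast
  qed
  then show ?thesis by blast
qed

theorem proposition6:
  fixes sc :: "dual \<Rightarrow> 'm::ab_group_add \<Rightarrow> 'm" and sp :: "'m \<Rightarrow> 'm \<Rightarrow> dual"
  assumes "free_rank3_dmodule sc"
    and "scalar_product sc sp"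
  shows "(\<forall>S. real_subspace sc S \<and> (\<forall>z\<in>S. z \<noteq> 0 \<longrightarrow> sliding_vector sc sp z)
              \<longrightarrow> real_dim sc S \<le> 3)
         \<and> E_set sc sp = {S. real_subspace sc S \<and> real_dim sc S = 3 \<and>
              (\<forall>z\<in>S. z \<noteq> 0 \<longrightarrow> sliding_vector sc sp z)}"
proof -
  obtain b1 b2 b3 where "setup3 sc b1 b2 b3" using setup3_from_free[OF assms(1)] by blast
  then interpret setup3 sc b1 b2 b3 .
  have sym: "\<And>x y. sp x y = sp y x" and lin: "\<And>a b x y z. sp (sc a x + sc b y) z = a * sp x z + b * sp y z"
    using assms(2) by (auto simp: scalar_product_def)
  have sp0: "sp 0 z = 0" for z using lin[of 0 z 0 z z] by simp
  have spadd: "sp (x + y) z = sp x z + sp y z" for x y z using lin[of 1 x 1 y z] by simp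
  have zero_eps: "0 \<in> eps_part sc" unfolding eps_part_def by (metis rangeI scale_zero_right)
  have inter: "S \<inter> eps_part sc = {0}"
    if "real_subspace sc S" "\<forall>z\<in>S. z \<noteq> 0 \<longrightarrow> sliding_vector sc sp z" for S
  proof -
    have "0 \<in> S" using that(1) by (simp add: real_subspace_def R.subspace_0)
    then show ?thesis using that(2) zero_eps by (auto simp: sliding_vector_def)
  qed
  have part1: "real_dim sc S \<le> 3"
    if "real_subspace sc S" "\<forall>z\<in>S. z \<noteq> 0 \<longrightarrow> sliding_vector sc sp z" for S
    using dim_bound[of S] inter[OF that] that(1) by (simp add: real_dim_def real_subspace_def)
  have part2: "\<forall>x\<in>S. \<forall>y\<in>S. Du (sp x y) = 0"
    if "real_subspace sc S" "\<forall>z\<in>S. z \<noteq> 0 \<longrightarrow> sliding_vector sc sp z" for S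
  proof (intro ballI)
    fix x y assume xy: "x \<in> S" "y \<in> S"
    have dz: "Du (sp z z) = 0" if "z \<in> S" for z
      using that \<open>\<forall>z\<in>S. z \<noteq> 0 \<longrightarrow> sliding_vector sc sp z\<close> sp0
      by (cases "z = 0") (auto simp: sliding_vector_def)
    have "x + y \<in> S" using xy \<open>real_subspace sc S\<close> by (simp add: real_subspace_def R.subspace_add)
    then have "Du (sp (x + y) (x + y)) = 0" by (rule dz)
    moreover have "sp (x + y) (x + y) = sp x x + sp y y + sp x y + sp y x"
      using spadd sym by (simp add: algebra_simps)
    ultimately have "Du (sp x y) + Du (sp y x) = 0" using dz xy by simp
    then show "Du (sp x y) = 0" using sym[of x y] by simp
  qed
  show ?thesis
  proof (intro conjI allI impI)
    show "real_dim sc S \<le> 3"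
      if "real_subspace sc S \<and> (\<forall>z\<in>S. z \<noteq> 0 \<longrightarrow> sliding_vector sc sp z)" for S
      using part1 that by blast
    show "E_set sc sp = {S. real_subspace sc S \<and> real_dim sc S = 3 \<and>
              (\<forall>z\<in>S. z \<noteq> 0 \<longrightarrow> sliding_vector sc sp z)}"
    proof (intro set_eqI iffI)
      fix S assume "S \<in> E_set sc sp"
      then show "S \<in> {S. real_subspace sc S \<and> real_dim sc S = 3 \<and>
              (\<forall>z\<in>S. z \<noteq> 0 \<longrightarrow> sliding_vector sc sp z)}"
        by (auto simp: E_set_def sliding_vector_def)
    next
      fix S assume "S \<in> {S. real_subspace sc S \<and> real_dim sc S = 3 \<and>
              (\<forall>z\<in>S. z \<noteq> 0 \<longrightarrow> sliding_vector sc sp z)}"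
      then show "S \<in> E_set sc sp"
        using part2[of S] inter[of S] by (auto simp: E_set_def)
    qed
  qed
qed

end
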